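(* Let $k\ge3$ be odd and let $G$ be a $k$-uniform hypergraph. Then the number of minimal canonical H-eigenvectors of the Laplacian tensor $\mathcal D-\mathcal A$ corresponding to the eigenvalue $0$, counted with $\mathbf x$ and $-\mathbf x$ identified, equals the number of connected components of $G$ (singletons included).
   Context: A $k$-uniform hypergraph $G=(V,E)$ has vertex set $V=[n]$ ($n\ge k$) and nonempty edge set $E$ of $k$-element subsets; $E_i=\{e\in E:i\in e\}$, $d_i=|E_i|$. Connected components are maximal sets of vertices pairwise joined by chains of edges with consecutive edges intersecting; an isolated vertex (singleton) is also a connected component. $\mathcal A$: $a_{i_1\dots i_k}=\frac1{(k-1)!}$ if $\{i_1,\dots,i_k\}\in E$, else $0$; $\mathcal D$ diagonal with $d_{i\dots i}=d_i$; so $((\mathcal D-\mathcal A)\mathbf x^{k-1})_i=d_ix_i^{k-1}-\sum_{e\in E_i}\prod_{j\in e\setminus\{i\}}x_j$. A nonzero $\mathbf x\in\mathbb C^n$ is an eigenvector of $\mathcal T$ for $\lambda$ if $(\mathcal T\mathbf x^{k-1})_i=\lambda x_i^{k-1}$ for all $i$; an H-eigenvector is a real eigenvector; canonical means $\max_i|x_i|=1$; an eigenvector of eigenvalue $0$ is minimal if no eigenvector of eigenvalue $0$ has support strictly contained in its support. *)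

theory Defs
  imports Complex_Main
begin

definition uniform_hypergraph :: "nat \<Rightarrow> nat \<Rightarrow> nat set set \<Rightarrow> bool" where
  "uniform_hypergraph k n E \<longleftrightarrow> k \<le> n \<and> E \<noteq> {} \<and>
     (\<forall>e\<in>E. e \<subseteq> {1..n} \<and> card e = k)"

definition edges_at :: "nat set set \<Rightarrow> nat \<Rightarrow> nat set set" where
  "edges_at E i = {e \<in> E. i \<in> e}"

definition degree :: "nat set set \<Rightarrow> nat \<Rightarrow> nat" where
  "degree E i = card (edges_at E i)"

definition cvec :: "nat \<Rightarrow> (nat \<Rightarrow> complex) \<Rightarrow> bool" where
  "cvec n x \<longleftrightarrow> (\<forall>i. i \<notin> {1..n} \<longrightarrow> x i = 0)"

text \<open>((D - A) x^(k-1))_i\<close>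
definition lap_apply :: "nat \<Rightarrow> nat set set \<Rightarrow> (nat \<Rightarrow> complex) \<Rightarrow> nat \<Rightarrow> complex" where
  "lap_apply k E x i = of_nat (degree E i) * x i ^ (k - 1)
      - (\<Sum>e\<in>edges_at E i. \<Prod>j\<in>e - {i}. x j)"

definition lap_eigenvector ::
  "nat \<Rightarrow> nat \<Rightarrow> nat set set \<Rightarrow> complex \<Rightarrow> (nat \<Rightarrow> complex) \<Rightarrow> bool" where
  "lap_eigenvector k n E lam x \<longleftrightarrow> cvec n x \<and> x \<noteq> (\<lambda>_. 0) \<and>
     (\<forall>i\<in>{1..n}. lap_apply k E x i = lam * x i ^ (k - 1))"

definition H_vector :: "(nat \<Rightarrow> complex) \<Rightarrow> bool" where
  "H_vector x \<longleftrightarrow> (\<forall>i. x i \<in> \<real>)"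

definition canonical :: "nat \<Rightarrow> (nat \<Rightarrow> complex) \<Rightarrow> bool" where
  "canonical n x \<longleftrightarrow> Max ((\<lambda>i. cmod (x i)) ` {1..n}) = 1"

definition support :: "nat \<Rightarrow> (nat \<Rightarrow> complex) \<Rightarrow> nat set" where
  "support n x = {i \<in> {1..n}. x i \<noteq> 0}"

definition minimal_zero_eigenvector ::
  "nat \<Rightarrow> nat \<Rightarrow> nat set set \<Rightarrow> (nat \<Rightarrow> complex) \<Rightarrow> bool" where
  "minimal_zero_eigenvector k n E x \<longleftrightarrow> lap_eigenvector k n E 0 x \<and>
     \<not> (\<exists>y. lap_eigenvector k n E 0 y \<and> support n y \<subset> support n x)"

definition min_canon_H_zero :: "nat \<Rightarrow> nat \<Rightarrow> nat set set \<Rightarrow> (nat \<Rightarrow> complex) set" where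
  "min_canon_H_zero k n E =
     {x. minimal_zero_eigenvector k n E x \<and> H_vector x \<and> canonical n x}"

text \<open>Connected components: i, j joined by a chain of edges with consecutive edges
  intersecting, i.e. in the transitive closure of "lie in a common edge";
  plus reflexivity so isolated vertices form singleton components.\<close>
definition joined :: "nat \<Rightarrow> nat set set \<Rightarrow> (nat \<times> nat) set" where
  "joined n E = Id_on {1..n} \<union> {(i, j). \<exists>e\<in>E. i \<in> e \<and> j \<in> e}\<^sup>+"

definition components :: "nat \<Rightarrow> nat set set \<Rightarrow> nat set set" where
  "components n E = {1..n} // joined n E"

end

theory Submission
  imports Defs
begin

lemma sum_eq_bound:
  fixes f :: "'a \<Rightarrow> real"
  assumes "finite S" "\<And>s. s\<in>S \<Longrightarrow> f s \<le> c" "sum f S \<ge> real (card S) * c" "s \<in> S"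
  shows "f s = c"
proof (rule ccontr)
  assume "f s \<noteq> c"
  hence "f s < c" using assms(2)[OF assms(4)] by linarith
  hence "sum f S < sum (\<lambda>_. c) S" using sum_strict_mono_ex1[OF assms(1), of f "\<lambda>_. c"] assms(2,4) by blast
  thus False using assms(3) by simp
qed

lemma prod_eq_bound:
  fixes g :: "'a \<Rightarrow> real"
  assumes "finite A" "\<And>a. a\<in>A \<Longrightarrow> 0 \<le> g a" "\<And>a. a\<in>A \<Longrightarrow> g a \<le> m"
    "prod g A \<ge> m ^ card A" "a \<in> A"
  shows "g a = m"
proof (rule ccontr)
  assume "g a \<noteq> m" hence lt: "g a < m" using assms(3)[OF assms(5)] by linarith
  have ga: "0 \<le> g a" using assms(2,5) by blast
  have m: "m > 0" using lt ga by linarith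
  have P: "prod g (A - {a}) \<le> m ^ card (A-{a})"
  proof -
    have "prod g (A - {a}) \<le> (\<Prod>_\<in>A-{a}. m)"
      by (rule prod_mono) (use assms(2,3) in blast)
    thus ?thesis by (simp only: prod_constant)
  qed
  have P0: "0 \<le> prod g (A - {a})" by (rule prod_nonneg) (use assms(2) in blast)
  have "prod g A = g a * prod g (A - {a})" by (rule prod.remove[OF assms(1,5)])
  also have "\<dots> \<le> g a * m ^ card (A-{a})" using P ga by (rule mult_left_mono)
  also have "\<dots> < m * m ^ card (A-{a})" using lt m by (intro mult_strict_right_mono) simp_all
  also have "\<dots> = m ^ card A"
  proof -
    have "card A = Suc (card (A - {a}))" using card_Suc_Diff1[OF assms(1,5)] by simp
    thus ?thesis by simp
  qed
  finally show False using assms(4) by linarith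
qed


definition Rel :: "nat set set \<Rightarrow> (nat \<times> nat) set" where
  "Rel E = {(i, j). \<exists>e\<in>E. i \<in> e \<and> j \<in> e}"

lemma joined_Rel: "joined n E = Id_on {1..n} \<union> (Rel E)\<^sup>+"
  unfolding joined_def Rel_def by simp

lemma Rel_sub: assumes "uniform_hypergraph k n E" "(a,b) \<in> Rel E"
  shows "a \<in> {1..n}" "b \<in> {1..n}"
proof -
  obtain e where "e \<in> E" "a \<in> e" "b \<in> e" using assms(2) unfolding Rel_def by auto
  moreover have "e \<subseteq> {1..n}" using assms(1) \<open>e \<in> E\<close> unfolding uniform_hypergraph_def by blast
  ultimately show "a \<in> {1..n}" "b \<in> {1..n}" by blast+
qed

lemma Rel_sym: "sym (Rel E)" unfolding Rel_def sym_def by auto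

lemma trancl_sub: assumes "uniform_hypergraph k n E" "(a,b) \<in> (Rel E)\<^sup>+"
  shows "a \<in> {1..n} \<and> b \<in> {1..n}"
  using assms(2)
proof (induction rule: trancl_induct)
  case (base y) then show ?case using Rel_sub[OF assms(1)] by blast
next
  case (step y z) then show ?case using Rel_sub[OF assms(1)] by blast
qed

lemma J_cases: "(a,b) \<in> joined n E \<Longrightarrow> (a = b \<and> a \<in> {1..n}) \<or> (a,b) \<in> (Rel E)\<^sup>+"
  unfolding joined_Rel by (simp add: Id_on_iff)

lemma J_I1: "a \<in> {1..n} \<Longrightarrow> (a,a) \<in> joined n E"
  unfolding joined_Rel by (simp add: Id_on_iff)

lemma J_I2: "(a,b) \<in> (Rel E)\<^sup>+ \<Longrightarrow> (a,b) \<in> joined n E"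
  unfolding joined_Rel by simp

lemma J_sub: assumes "uniform_hypergraph k n E" "(a,b) \<in> joined n E"
  shows "a \<in> {1..n} \<and> b \<in> {1..n}"
  using J_cases[OF assms(2)] trancl_sub[OF assms(1)] by blast

lemma J_sym: assumes "(a,b) \<in> joined n E" shows "(b,a) \<in> joined n E"
proof -
  have s: "sym ((Rel E)\<^sup>+)" by (rule sym_trancl[OF Rel_sym])
  show ?thesis using J_cases[OF assms]
  proof
    assume "a = b \<and> a \<in> {1..n}" thus ?thesis using J_I1 by blast
  next
    assume "(a,b) \<in> (Rel E)\<^sup>+" thus ?thesis using s J_I2 unfolding sym_def by blast
  qed
qed

lemma J_trans: assumes "(a,b) \<in> joined n E" "(b,c) \<in> joined n E" shows "(a,c) \<in> joined n E"
  using J_cases[OF assms(1)] J_cases[OF assms(2)] assms J_I2 trancl_trans[of a b "Rel E" c]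
  by metis

lemma J_Rel: assumes "(a,b) \<in> joined n E" "(b,c) \<in> Rel E" shows "(a,c) \<in> joined n E"
  using J_cases[OF assms(1)] J_I2 trancl_into_trancl[of a b "Rel E" c] r_into_trancl[of b c "Rel E"] assms(2)
  by metis

lemma comp_cases: "C \<in> components n E \<Longrightarrow> \<exists>c\<in>{1..n}. C = joined n E `` {c}"
  unfolding components_def quotient_def by blast

lemma J_refl: "c \<in> {1..n} \<Longrightarrow> (c,c) \<in> joined n E"
  by (rule J_I1)

lemma edges_fin: assumes "uniform_hypergraph k n E" shows "finite (edges_at E i)"
proof -
  have "edges_at E i \<subseteq> Pow {1..n}" using assms unfolding uniform_hypergraph_def edges_at_def by blast
  thus ?thesis by (rule finite_subset) simp
qed

lemma edge_props: assumes "uniform_hypergraph k n E" "k \<ge> 3" "e \<in> E"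
  shows "finite e" "card e = k" "e \<subseteq> {1..n}"
proof -
  show c: "card e = k" "e \<subseteq> {1..n}" using assms(1,3) unfolding uniform_hypergraph_def by blast+
  show "finite e" using c(2) finite_subset by blast
qed

lemma edge_at_props: assumes "uniform_hypergraph k n E" "k \<ge> 3" "e \<in> edges_at E i"
  shows "finite (e - {i})" "card (e - {i}) = k - 1" "e \<in> E" "i \<in> e"
proof -
  show ei: "e \<in> E" "i \<in> e" using assms(3) unfolding edges_at_def by blast+
  show "finite (e - {i})" using edge_props[OF assms(1,2) ei(1)] by simp
  show "card (e - {i}) = k - 1" using edge_props[OF assms(1,2) ei(1)] ei(2) by (simp add: card_Diff_singleton)
qed

lemma abs_prop:
  fixes y :: "nat \<Rightarrow> complex"
  assumes U: "uniform_hypergraph k n E" and k3: "k \<ge> 3"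
  and eq: "lap_apply k E y i = 0" and bnd: "\<And>l. cmod (y l) \<le> m" and yi: "cmod (y i) = m"
  and e: "e \<in> E" "i \<in> e" "l \<in> e"
  shows "cmod (y l) = m"
proof -
  define Ei where "Ei = edges_at E i"
  have fEi: "finite Ei" using edges_fin[OF U] Ei_def by simp
  have cardEi: "card Ei = degree E i" unfolding Ei_def degree_def by simp
  have m0: "0 \<le> m" using bnd[of i] norm_ge_zero[of "y i"] by linarith
  have le: "(\<Prod>j\<in>e'-{i}. cmod (y j)) \<le> m^(k-1)" if "e' \<in> Ei" for e'
  proof -
    have "(\<Prod>j\<in>e'-{i}. cmod (y j)) \<le> (\<Prod>j\<in>e'-{i}. m)"
      by (rule prod_mono) (simp add: bnd)
    also have "\<dots> = m^(k-1)" using edge_at_props(2)[OF U k3, of e' i] that Ei_def by (simp add: prod_constant)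
    finally show ?thesis .
  qed
  have "real (card Ei) * m^(k-1) = cmod (of_nat (degree E i) * y i ^ (k-1))"
    by (simp add: norm_mult norm_power yi cardEi)
  also have "of_nat (degree E i) * y i ^ (k-1) = (\<Sum>e\<in>Ei. \<Prod>j\<in>e-{i}. y j)"
    using eq unfolding lap_apply_def Ei_def by simp
  also have "cmod (\<Sum>e\<in>Ei. \<Prod>j\<in>e-{i}. y j) \<le> (\<Sum>e\<in>Ei. cmod (\<Prod>j\<in>e-{i}. y j))"
    by (rule norm_sum)
  also have "\<dots> = (\<Sum>e\<in>Ei. \<Prod>j\<in>e-{i}. cmod (y j))" by (simp add: prod_norm)
  finally have ge: "real (card Ei) * m^(k-1) \<le> (\<Sum>e\<in>Ei. \<Prod>j\<in>e-{i}. cmod (y j))" .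
  have eEi: "e \<in> Ei" using e Ei_def edges_at_def by auto
  have pe: "(\<Prod>j\<in>e-{i}. cmod (y j)) = m^(k-1)"
    using sum_eq_bound[OF fEi le ge eEi] by simp
  show ?thesis
  proof (cases "l = i")
    case True then show ?thesis using yi by simp
  next
    case False
    have "m ^ card (e - {i}) \<le> (\<Prod>j\<in>e-{i}. cmod (y j))"
      using pe edge_at_props(2)[OF U k3 eEi[unfolded Ei_def]] by simp
    from prod_eq_bound[of "e-{i}" "\<lambda>j. cmod (y j)" m l, OF edge_at_props(1)[OF U k3 eEi[unfolded Ei_def]] _ _ this]
    show ?thesis using False e(3) bnd by simp
  qed
qed

lemma real_prop:
  fixes r :: "nat \<Rightarrow> real"
  assumes U: "uniform_hypergraph k n E" and k3: "k \<ge> 3" and ev: "even (k-1)"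
  and eq: "real (degree E i) * r i^(k-1) = (\<Sum>e\<in>edges_at E i. \<Prod>j\<in>e-{i}. r j)"
  and bnd: "\<And>l. \<bar>r l\<bar> \<le> m" and ri: "\<bar>r i\<bar> = m"
  and e: "e \<in> E" "i \<in> e"
  shows "(\<Prod>j\<in>e-{i}. r j) = m^(k-1)" "\<And>l. l \<in> e \<Longrightarrow> \<bar>r l\<bar> = m"
proof -
  define Ei where "Ei = edges_at E i"
  have fEi: "finite Ei" using edges_fin[OF U] Ei_def by simp
  have cardEi: "card Ei = degree E i" unfolding Ei_def degree_def by simp
  have m0: "0 \<le> m" using bnd[of i] abs_ge_zero[of "r i"] by linarith
  have le0: "(\<Prod>j\<in>e'-{i}. \<bar>r j\<bar>) \<le> m^(k-1)" if "e' \<in> Ei" for e'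
  proof -
    have "(\<Prod>j\<in>e'-{i}. \<bar>r j\<bar>) \<le> (\<Prod>j\<in>e'-{i}. m)"
      by (rule prod_mono) (simp add: bnd)
    also have "\<dots> = m^(k-1)" using edge_at_props(2)[OF U k3, of e' i] that Ei_def by (simp add: prod_constant)
    finally show ?thesis .
  qed
  have le: "(\<Prod>j\<in>e'-{i}. r j) \<le> m^(k-1)" if "e' \<in> Ei" for e'
  proof -
    have "(\<Prod>j\<in>e'-{i}. r j) \<le> \<bar>\<Prod>j\<in>e'-{i}. r j\<bar>" by simp
    also have "\<dots> = (\<Prod>j\<in>e'-{i}. \<bar>r j\<bar>)" by (simp add: abs_prod)
    finally show ?thesis using le0[OF that] by linarith
  qed
  have "r i ^ (k-1) = m^(k-1)" using power_even_abs[OF ev, of "r i"] ri by simp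
  hence ge: "real (card Ei) * m^(k-1) \<le> (\<Sum>e\<in>Ei. \<Prod>j\<in>e-{i}. r j)"
    using eq cardEi Ei_def by simp
  have eEi: "e \<in> Ei" using e Ei_def edges_at_def by auto
  show pe: "(\<Prod>j\<in>e-{i}. r j) = m^(k-1)"
    using sum_eq_bound[OF fEi le ge eEi] by simp
  show "\<bar>r l\<bar> = m" if l: "l \<in> e" for l
  proof (cases "l = i")
    case True then show ?thesis using ri by simp
  next
    case False
    have "m ^ card (e - {i}) \<le> (\<Prod>j\<in>e-{i}. \<bar>r j\<bar>)"
    proof -
      have "m ^ card (e - {i}) = \<bar>\<Prod>j\<in>e-{i}. r j\<bar>"
        using pe edge_at_props(2)[OF U k3 eEi[unfolded Ei_def]] m0 by simp
      thus ?thesis by (simp add: abs_prod)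
    qed
    from prod_eq_bound[of "e-{i}" "\<lambda>j. \<bar>r j\<bar>" m l, OF edge_at_props(1)[OF U k3 eEi[unfolded Ei_def]] _ _ this]
    show ?thesis using False l bnd by simp
  qed
qed


lemma real_step:
  fixes r :: "nat \<Rightarrow> real"
  assumes U: "uniform_hypergraph k n E" and k3: "k \<ge> 3" and ev: "even (k-1)"
  and eqs: "\<And>v. v \<in> {1..n} \<Longrightarrow> real (degree E v) * r v^(k-1) = (\<Sum>e\<in>edges_at E v. \<Prod>j\<in>e-{v}. r j)"
  and bnd: "\<And>l. \<bar>r l\<bar> \<le> m" and m: "m > 0" and ra: "\<bar>r a\<bar> = m" and ab: "(a,b) \<in> Rel E"
  shows "r b = r a \<and> \<bar>r b\<bar> = m"
proof -
  obtain e where e: "e \<in> E" "a \<in> e" "b \<in> e" using ab unfolding Rel_def by blast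
  have ea: "a \<in> {1..n}" and eb: "b \<in> {1..n}" using Rel_sub[OF U ab] by blast+
  have fe: "finite e" using edge_props(1)[OF U k3 e(1)] .
  have pa: "(\<Prod>j\<in>e-{a}. r j) = m^(k-1)" using real_prop(1)[OF U k3 ev eqs[OF ea] bnd ra e(1,2)] .
  have rb: "\<bar>r b\<bar> = m" using real_prop(2)[OF U k3 ev eqs[OF ea] bnd ra e(1,2) e(3)] .
  have pb: "(\<Prod>j\<in>e-{b}. r j) = m^(k-1)" using real_prop(1)[OF U k3 ev eqs[OF eb] bnd rb e(1,3)] .
  have "r a * m^(k-1) = prod r e" using prod.remove[OF fe e(2), of r] pa by simp
  also have "\<dots> = r b * m^(k-1)" using prod.remove[OF fe e(3), of r] pb by simp
  finally have "r a * m^(k-1) = r b * m^(k-1)" .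
  moreover have "m^(k-1) \<noteq> 0" using m by simp
  ultimately have "r a = r b" by (metis mult_right_cancel)
  thus ?thesis using rb by simp
qed

lemma real_trancl:
  fixes r :: "nat \<Rightarrow> real"
  assumes U: "uniform_hypergraph k n E" and k3: "k \<ge> 3" and ev: "even (k-1)"
  and eqs: "\<And>v. v \<in> {1..n} \<Longrightarrow> real (degree E v) * r v^(k-1) = (\<Sum>e\<in>edges_at E v. \<Prod>j\<in>e-{v}. r j)"
  and bnd: "\<And>l. \<bar>r l\<bar> \<le> m" and m: "m > 0" and ra: "\<bar>r a\<bar> = m" and ab: "(a,b) \<in> (Rel E)\<^sup>+"
  shows "r b = r a \<and> \<bar>r b\<bar> = m"
  using ab
proof (induction rule: trancl_induct)
  case (base y) then show ?case using real_step[OF U k3 ev eqs bnd m ra] by blast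
next
  case (step y z)
  have "r z = r y \<and> \<bar>r z\<bar> = m" using real_step[OF U k3 ev eqs bnd m, of y z] step by blast
  then show ?case using step ra by simp
qed

lemma abs_trancl:
  fixes y :: "nat \<Rightarrow> complex"
  assumes U: "uniform_hypergraph k n E" and k3: "k \<ge> 3"
  and eqs: "\<And>v. v \<in> {1..n} \<Longrightarrow> lap_apply k E y v = 0"
  and bnd: "\<And>l. cmod (y l) \<le> m" and ya: "cmod (y a) = m" and ab: "(a,b) \<in> (Rel E)\<^sup>+"
  shows "cmod (y b) = m"
  using ab
proof (induction rule: trancl_induct)
  case (base z)
  obtain e where e: "e \<in> E" "a \<in> e" "z \<in> e" using base unfolding Rel_def by blast
  have "a \<in> {1..n}" using Rel_sub[OF U base] by blast
  then show ?case using abs_prop[OF U k3 eqs bnd ya e] by blast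
next
  case (step z w)
  obtain e where e: "e \<in> E" "z \<in> e" "w \<in> e" using step(2) unfolding Rel_def by blast
  have "z \<in> {1..n}" using Rel_sub[OF U step(2)] by blast
  then show ?case using abs_prop[OF U k3 eqs bnd step(3) e] by blast
qed

definition ind :: "nat set \<Rightarrow> nat \<Rightarrow> complex" where
  "ind C = (\<lambda>v. if v \<in> C then 1 else 0)"

lemma comp_props:
  assumes U: "uniform_hypergraph k n E" and C: "C \<in> components n E"
  shows "C \<subseteq> {1..n}" "C \<noteq> {}"
    "\<And>a b. a \<in> C \<Longrightarrow> (a,b) \<in> Rel E \<Longrightarrow> b \<in> C"
    "\<And>a b. b \<in> C \<Longrightarrow> (a,b) \<in> Rel E \<Longrightarrow> a \<in> C"
    "\<And>a b. a \<in> C \<Longrightarrow> b \<in> C \<Longrightarrow> (a,b) \<in> joined n E"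
proof -
  obtain c where c: "c \<in> {1..n}" "C = joined n E `` {c}" using comp_cases[OF C] by blast
  show "C \<subseteq> {1..n}" using c(2) J_sub[OF U] by blast
  show "C \<noteq> {}" using c J_I1 by blast
  show 3: "b \<in> C" if "a \<in> C" "(a,b) \<in> Rel E" for a b
    using that c(2) J_Rel by blast
  show "a \<in> C" if "b \<in> C" "(a,b) \<in> Rel E" for a b
  proof -
    have "(b,a) \<in> Rel E" using that(2) Rel_sym[of E] unfolding sym_def by blast
    thus ?thesis using 3 that(1) by blast
  qed
  show "(a,b) \<in> joined n E" if "a \<in> C" "b \<in> C" for a b
  proof -
    have "(c,a) \<in> joined n E" "(c,b) \<in> joined n E" using that c(2) by blast+
    thus ?thesis using J_sym J_trans by blast
  qed
qed

lemma neg_lap: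
  assumes U: "uniform_hypergraph k n E" and k3: "k \<ge> 3" and ev: "even (k-1)"
  shows "lap_apply k E (- x) i = lap_apply k E x i"
proof -
  have "(\<Prod>j\<in>e-{i}. - x j) = (\<Prod>j\<in>e-{i}. x j)" if "e \<in> edges_at E i" for e
    using edge_at_props(2)[OF U k3 that] ev by (simp add: prod_uminus)
  hence "(\<Sum>e\<in>edges_at E i. \<Prod>j\<in>e-{i}. (- x) j) = (\<Sum>e\<in>edges_at E i. \<Prod>j\<in>e-{i}. x j)"
    by (intro sum.cong) simp_all
  moreover have "(- x) i ^ (k-1) = x i ^ (k-1)" using ev by (simp add: power_minus_even)
  ultimately show ?thesis unfolding lap_apply_def by simp
qed

lemma ind_eig:
  assumes U: "uniform_hypergraph k n E" and k3: "k \<ge> 3" and C: "C \<in> components n E"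
  shows "lap_eigenvector k n E 0 (ind C)"
proof -
  note cp = comp_props[OF U C]
  have cv: "cvec n (ind C)" using cp(1) unfolding cvec_def ind_def by auto
  obtain c where "c \<in> C" using cp(2) by blast
  hence nz: "ind C \<noteq> (\<lambda>_. 0)" unfolding ind_def by (metis one_neq_zero)
  have "lap_apply k E (ind C) i = 0" if i: "i \<in> {1..n}" for i
  proof (cases "i \<in> C")
    case True
    have "(\<Prod>j\<in>e-{i}. ind C j) = 1" if "e \<in> edges_at E i" for e
    proof -
      have "e \<in> E" "i \<in> e" using that unfolding edges_at_def by blast+
      hence "\<forall>j\<in>e. j \<in> C" using cp(3)[OF True] unfolding Rel_def by blast
      thus ?thesis unfolding ind_def by simp
    qed
    hence "(\<Sum>e\<in>edges_at E i. \<Prod>j\<in>e-{i}. ind C j) = of_nat (card (edges_at E i))" by simp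
    thus ?thesis unfolding lap_apply_def degree_def using True by (simp add: ind_def)
  next
    case False
    have "(\<Prod>j\<in>e-{i}. ind C j) = 0" if "e \<in> edges_at E i" for e
    proof -
      have ei: "e \<in> E" "i \<in> e" using that unfolding edges_at_def by blast+
      have "card (e - {i}) = k - 1" using edge_at_props(2)[OF U k3 that] .
      hence "e - {i} \<noteq> {}" using k3 by (metis card.empty diff_is_0_eq le_trans numeral_le_one_iff one_le_numeral semiring_norm(70) not_less_eq_eq)
      then obtain j where j: "j \<in> e - {i}" by blast
      have "j \<notin> C" using cp(4)[of j i] False ei j unfolding Rel_def by blast
      hence "ind C j = 0" unfolding ind_def by simp
      thus ?thesis using j edge_at_props(1)[OF U k3 that] by (intro prod_zero) blast+
    qed
    hence "(\<Sum>e\<in>edges_at E i. \<Prod>j\<in>e-{i}. ind C j) = 0" by simp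
    moreover have "ind C i ^ (k-1) = 0" using False k3 unfolding ind_def by simp
    ultimately show ?thesis unfolding lap_apply_def by simp
  qed
  thus ?thesis unfolding lap_eigenvector_def using cv nz by simp
qed

lemma negind_eig:
  assumes U: "uniform_hypergraph k n E" and k3: "k \<ge> 3" and ev: "even (k-1)" and C: "C \<in> components n E"
  shows "lap_eigenvector k n E 0 (- ind C)"
proof -
  have e: "lap_eigenvector k n E 0 (ind C)" by (rule ind_eig[OF U k3 C])
  have "cvec n (- ind C)" using e unfolding lap_eigenvector_def cvec_def by simp
  moreover have "- ind C \<noteq> (\<lambda>_. 0)" using e unfolding lap_eigenvector_def fun_eq_iff by simp
  ultimately show ?thesis using e neg_lap[OF U k3 ev] unfolding lap_eigenvector_def by simp
qed

lemma supp_ind: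
  assumes "C \<subseteq> {1..n}"
  shows "support n (ind C) = C" "support n (- ind C) = C"
  using assms unfolding support_def ind_def by auto


lemma minimal_lemma:
  assumes U: "uniform_hypergraph k n E" and k3: "k \<ge> 3" and C: "C \<in> components n E"
  and x: "lap_eigenvector k n E 0 x" and sx: "support n x = C"
  shows "minimal_zero_eigenvector k n E x"
proof -
  note cp = comp_props[OF U C]
  have "\<not> (lap_eigenvector k n E 0 y \<and> support n y \<subset> C)" for y
  proof
    assume h: "lap_eigenvector k n E 0 y \<and> support n y \<subset> C"
    have cv: "cvec n y" and nz: "y \<noteq> (\<lambda>_. 0)" and eqs: "\<And>v. v \<in> {1..n} \<Longrightarrow> lap_apply k E y v = 0"
      using h unfolding lap_eigenvector_def by auto
    obtain v where v: "y v \<noteq> 0" using nz by (auto simp: fun_eq_iff)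
    have vn: "v \<in> {1..n}" using v cv unfolding cvec_def by blast
    define M where "M = Max ((\<lambda>i. cmod (y i)) ` {1..n})"
    have fin: "finite ((\<lambda>i. cmod (y i)) ` {1..n})" by simp
    have ne: "(\<lambda>i. cmod (y i)) ` {1..n} \<noteq> {}" using vn by blast
    obtain i where i: "i \<in> {1..n}" "cmod (y i) = M" using Max_in[OF fin ne] M_def by auto
    have Mv: "cmod (y v) \<le> M" unfolding M_def using vn by (intro Max_ge[OF fin]) simp
    moreover have "0 < cmod (y v)" using v by simp
    ultimately have Mpos: "M > 0" by linarith
    have bnd: "cmod (y l) \<le> M" for l
    proof (cases "l \<in> {1..n}")
      case True then show ?thesis unfolding M_def by (intro Max_ge[OF fin]) simp
    next
      case False then have "y l = 0" using cv unfolding cvec_def by blast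
      then show ?thesis using Mpos by simp
    qed
    have "i \<in> support n y" using i Mpos unfolding support_def by auto
    hence iC: "i \<in> C" using h by blast
    have "C \<subseteq> support n y"
    proof
      fix j assume jC: "j \<in> C"
      have "(i,j) \<in> joined n E" using cp(5)[OF iC jC] .
      hence "cmod (y j) = M" using J_cases abs_trancl[OF U k3 eqs bnd i(2)] i(2) by metis
      moreover have "j \<in> {1..n}" using jC cp(1) by blast
      ultimately show "j \<in> support n y" using Mpos unfolding support_def by auto
    qed
    thus False using h by blast
  qed
  thus ?thesis unfolding minimal_zero_eigenvector_def using x sx by blast
qed

lemma ind_in:
  assumes U: "uniform_hypergraph k n E" and k3: "k \<ge> 3" and ev: "even (k-1)" and C: "C \<in> components n E"
  shows "ind C \<in> min_canon_H_zero k n E" "- ind C \<in> min_canon_H_zero k n E"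
proof -
  note cp = comp_props[OF U C]
  obtain c where c: "c \<in> C" using cp(2) by blast
  have cn: "c \<in> {1..n}" using c cp(1) by blast
  have H: "H_vector (ind C)" "H_vector (- ind C)" unfolding H_vector_def ind_def by auto
  have img: "(\<lambda>i. cmod (ind C i)) ` {1..n} = (\<lambda>i. cmod ((- ind C) i)) ` {1..n}" by simp
  have can: "canonical n (ind C)"
  proof -
    have "Max ((\<lambda>i. cmod (ind C i)) ` {1..n}) = 1"
    proof (rule Max_eqI)
      show "finite ((\<lambda>i. cmod (ind C i)) ` {1..n})" by simp
      show "y \<le> 1" if "y \<in> (\<lambda>i. cmod (ind C i)) ` {1..n}" for y
        using that unfolding ind_def by auto
      show "1 \<in> (\<lambda>i. cmod (ind C i)) ` {1..n}"
        using c cn unfolding ind_def by (intro image_eqI[of _ _ c]) auto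
    qed
    thus ?thesis unfolding canonical_def .
  qed
  hence can2: "canonical n (- ind C)" unfolding canonical_def using img by simp
  have m1: "minimal_zero_eigenvector k n E (ind C)"
    using minimal_lemma[OF U k3 C ind_eig[OF U k3 C] supp_ind(1)[OF cp(1)]] .
  have m2: "minimal_zero_eigenvector k n E (- ind C)"
    using minimal_lemma[OF U k3 C negind_eig[OF U k3 ev C] supp_ind(2)[OF cp(1)]] .
  show "ind C \<in> min_canon_H_zero k n E" unfolding min_canon_H_zero_def using m1 H can by blast
  show "- ind C \<in> min_canon_H_zero k n E" unfolding min_canon_H_zero_def using m2 H can2 by blast
qed


lemma main_char:
  assumes U: "uniform_hypergraph k n E" and k3: "k \<ge> 3" and ev: "even (k-1)"
  and x: "x \<in> min_canon_H_zero k n E"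
  shows "\<exists>C\<in>components n E. x = ind C \<or> x = - ind C"
proof -
  have mz: "minimal_zero_eigenvector k n E x" and H: "H_vector x" and can: "canonical n x"
    using x unfolding min_canon_H_zero_def by blast+
  have eig: "lap_eigenvector k n E 0 x" using mz unfolding minimal_zero_eigenvector_def by blast
  have cv: "cvec n x" and eqs: "\<And>v. v \<in> {1..n} \<Longrightarrow> lap_apply k E x v = 0"
    using eig unfolding lap_eigenvector_def by auto
  define r where "r v = Re (x v)" for v
  have xr: "x v = complex_of_real (r v)" for v
  proof -
    have "x v \<in> \<real>" using H unfolding H_vector_def by blast
    then obtain t where "x v = of_real t" unfolding Reals_def by blast
    thus ?thesis unfolding r_def by simp
  qed
  hence xeq: "x = (\<lambda>v. complex_of_real (r v))" by (simp add: fun_eq_iff)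
  have reqs: "real (degree E v) * r v^(k-1) = (\<Sum>e\<in>edges_at E v. \<Prod>j\<in>e-{v}. r j)" if v: "v \<in> {1..n}" for v
  proof -
    have "lap_apply k E (\<lambda>v. complex_of_real (r v)) v
       = complex_of_real (real (degree E v) * r v^(k-1) - (\<Sum>e\<in>edges_at E v. \<Prod>j\<in>e-{v}. r j))"
      unfolding lap_apply_def by simp
    hence "complex_of_real (real (degree E v) * r v^(k-1) - (\<Sum>e\<in>edges_at E v. \<Prod>j\<in>e-{v}. r j)) = 0"
      using eqs[OF v] xeq by simp
    hence "real (degree E v) * r v^(k-1) - (\<Sum>e\<in>edges_at E v. \<Prod>j\<in>e-{v}. r j) = 0"
      by (simp only: of_real_eq_0_iff)
    thus ?thesis by linarith
  qed
  have n1: "1 \<le> n" using U k3 unfolding uniform_hypergraph_def by simp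
  have fin: "finite ((\<lambda>i. cmod (x i)) ` {1..n})" by simp
  have ne: "(\<lambda>i. cmod (x i)) ` {1..n} \<noteq> {}" using n1 by simp
  obtain i where i: "i \<in> {1..n}" "cmod (x i) = 1"
    using Max_in[OF fin ne] can unfolding canonical_def by auto
  have absr: "\<bar>r l\<bar> = cmod (x l)" for l using xr[of l] by simp
  have bnd: "\<bar>r l\<bar> \<le> 1" for l
  proof (cases "l \<in> {1..n}")
    case True
    have "cmod (x l) \<le> Max ((\<lambda>i. cmod (x i)) ` {1..n})" using True by (intro Max_ge[OF fin]) simp
    then show ?thesis using can absr unfolding canonical_def by simp
  next
    case False then have "x l = 0" using cv unfolding cvec_def by blast
    then show ?thesis using absr by simp
  qed
  have ri: "\<bar>r i\<bar> = 1" using absr i by simp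
  define C where "C = joined n E `` {i}"
  have C: "C \<in> components n E" unfolding C_def components_def quotient_def using i by blast
  note cp = comp_props[OF U C]
  have onC: "r j = r i" if "j \<in> C" for j
  proof -
    have "(i,j) \<in> joined n E" using that C_def by blast
    thus ?thesis using J_cases real_trancl[OF U k3 ev reqs bnd _ ri] by fastforce
  qed
  have offC: "x v = 0" if "v \<notin> C" for v
  proof (rule ccontr)
    assume xv: "x v \<noteq> 0"
    have vn: "v \<in> {1..n}" using xv cv unfolding cvec_def by blast
    have "C \<subseteq> support n x"
    proof
      fix j assume "j \<in> C"
      moreover have "x j \<noteq> 0" using onC[OF \<open>j \<in> C\<close>] xr[of j] ri by auto
      ultimately show "j \<in> support n x" using cp(1) unfolding support_def by blast
    qed
    moreover have "v \<in> support n x" using vn xv unfolding support_def by blast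
    ultimately have "support n (ind C) \<subset> support n x" using supp_ind(1)[OF cp(1)] that by blast
    thus False using mz ind_eig[OF U k3 C] unfolding minimal_zero_eigenvector_def by blast
  qed
  have "r i = 1 \<or> r i = -1" using ri by linarith
  thus ?thesis
  proof
    assume "r i = 1"
    hence "x = ind C" unfolding ind_def using onC offC xr by (auto simp: fun_eq_iff)
    thus ?thesis using C by blast
  next
    assume "r i = -1"
    hence "x = - ind C" unfolding ind_def using onC offC xr by (auto simp: fun_eq_iff)
    thus ?thesis using C by blast
  qed
qed

theorem proposition5p3:
  fixes k n :: nat and E :: "nat set set"
  assumes "odd k" and "k \<ge> 3" and "uniform_hypergraph k n E"
  shows "card ((\<lambda>x. {x, - x}) ` min_canon_H_zero k n E) = card (components n E)"
proof -
  have ev: "even (k-1)" using assms(1,2) by simp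
  note U = assms(3) and k3 = assms(2)
  define g where "g C = {ind C, - ind C}" for C
  have img: "(\<lambda>x. {x, - x}) ` min_canon_H_zero k n E = g ` components n E"
  proof
    show "(\<lambda>x. {x, - x}) ` min_canon_H_zero k n E \<subseteq> g ` components n E"
    proof
      fix z assume "z \<in> (\<lambda>x. {x, - x}) ` min_canon_H_zero k n E"
      then obtain x where x: "x \<in> min_canon_H_zero k n E" "z = {x, - x}" by blast
      obtain C where C: "C \<in> components n E" "x = ind C \<or> x = - ind C"
        using main_char[OF U k3 ev x(1)] by blast
      have "z = g C" using C(2) x(2) unfolding g_def by auto
      thus "z \<in> g ` components n E" using C(1) by blast
    qed
    show "g ` components n E \<subseteq> (\<lambda>x. {x, - x}) ` min_canon_H_zero k n E"
    proof
      fix z assume "z \<in> g ` components n E"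
      then obtain C where C: "C \<in> components n E" "z = g C" by blast
      have "z = (\<lambda>x. {x, - x}) (ind C)" using C(2) unfolding g_def by simp
      thus "z \<in> (\<lambda>x. {x, - x}) ` min_canon_H_zero k n E" using ind_in(1)[OF U k3 ev C(1)] by blast
    qed
  qed
  have inj: "inj_on g (components n E)"
  proof
    fix C D assume C: "C \<in> components n E" and D: "D \<in> components n E" and gg: "g C = g D"
    note cpC = comp_props[OF U C] and cpD = comp_props[OF U D]
    have "ind C \<in> g D" using gg unfolding g_def by blast
    hence "ind C = ind D \<or> ind C = - ind D" unfolding g_def by blast
    thus "C = D"
    proof
      assume "ind C = ind D"
      thus ?thesis using supp_ind(1)[OF cpC(1)] supp_ind(1)[OF cpD(1)] by metis
    next
      assume h: "ind C = - ind D"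
      obtain c where c: "c \<in> C" using cpC(2) by blast
      have "ind C c = 1" using c unfolding ind_def by simp
      moreover have "(- ind D) c \<noteq> 1" unfolding ind_def by simp
      ultimately show ?thesis using h by simp
    qed
  qed
  show ?thesis using img card_image[OF inj] by simp
qed

end
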